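(* Let $\mathbb Z\langle X\rangle$ be the free unital associative ring on $X=\{x_1,x_2,\dots\}$ and let $I$ be the left ideal of $\mathbb Z\langle X\rangle$ generated by a set $S\subset\Gamma$. Then \[I=\Gamma\cdot S\;\oplus\bigoplus_{s\ge1;\ i_1\le\dots\le i_s}x_{i_1}x_{i_2}\cdots x_{i_s}\,\Gamma\cdot S,\] where $\Gamma\cdot S$ is the left ideal of the ring $\Gamma$ generated by $S$. In particular, $I\cap\Gamma=\Gamma\cdot S$.
   Context: $\Gamma$ is the unital subring of $\mathbb Z\langle X\rangle$ generated by all left-normed commutators $[x_{i_1},\dots,x_{i_l}]$ with $l\ge2$ (where $[a,b]=ab-ba$, $[a_1,\dots,a_n]=[[a_1,\dots,a_{n-1}],a_n]$). The direct sums are of additive subgroups. *)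

theory Defs
  imports "HOL-Library.Poly_Mapping"
begin

datatype word = Word "nat list"

instantiation word :: monoid_add
begin
fun plus_word :: "word \<Rightarrow> word \<Rightarrow> word" where
  "plus_word (Word u) (Word v) = Word (u @ v)"
definition zero_word :: word where "zero_word = Word []"
instance
proof
  fix a b c :: word
  show "a + b + c = a + (b + c)" by (cases a; cases b; cases c) simp
  show "0 + a = a" by (cases a) (simp add: zero_word_def)
  show "a + 0 = a" by (cases a) (simp add: zero_word_def)
qed
end

text \<open>The free unital associative ring Z<X>: finitely supported integer
  combinations of words, with the convolution (monoid-algebra) product.\<close>
type_synonym freering = "word \<Rightarrow>\<^sub>0 int"

definition var :: "nat \<Rightarrow> freering" where
  "var i = Poly_Mapping.single (Word [i]) 1"

definition mon :: "nat list \<Rightarrow> freering" where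
  "mon is = prod_list (map var is)"

definition commut :: "freering \<Rightarrow> freering \<Rightarrow> freering" where
  "commut a b = a * b - b * a"

fun lcomm :: "nat list \<Rightarrow> freering" where
  "lcomm [] = 0"
| "lcomm (i # is) = foldl (\<lambda>a j. commut a (var j)) (var i) is"

inductive_set Gamma :: "freering set" where
  one: "1 \<in> Gamma"
| gen: "length is \<ge> 2 \<Longrightarrow> lcomm is \<in> Gamma"
| add: "a \<in> Gamma \<Longrightarrow> b \<in> Gamma \<Longrightarrow> a + b \<in> Gamma"
| neg: "a \<in> Gamma \<Longrightarrow> - a \<in> Gamma"
| mult: "a \<in> Gamma \<Longrightarrow> b \<in> Gamma \<Longrightarrow> a * b \<in> Gamma"

inductive_set left_ideal_in :: "freering set \<Rightarrow> freering set \<Rightarrow> freering set"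
  for R S where
  zero: "0 \<in> left_ideal_in R S"
| gen: "r \<in> R \<Longrightarrow> s \<in> S \<Longrightarrow> r * s \<in> left_ideal_in R S"
| add: "a \<in> left_ideal_in R S \<Longrightarrow> b \<in> left_ideal_in R S \<Longrightarrow> a + b \<in> left_ideal_in R S"

definition summand :: "freering set \<Rightarrow> nat list \<Rightarrow> freering set" where
  "summand S is = {mon is * a | a. a \<in> left_ideal_in Gamma S}"

end

theory Submission
  imports Defs
begin

lemma mon_frag: "mon ws = frag_of (Word ws)"
proof (induction ws)
  case Nil
  then show ?case by (simp add: mon_def zero_word_def[symmetric])
next
  case (Cons j ws)
  then show ?case by (simp add: mon_def var_def mult_single)
qed

lemma mon_Cons: "mon (j # ws) = var j * mon ws" by (simp add: mon_def)
lemma mon_Nil: "mon [] = 1" by (simp add: mon_def)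
lemma mon_append: "mon (u @ v) = mon u * mon v" by (simp add: mon_def)
lemma mon_single: "mon [j] = var j" by (simp add: mon_def)

fun dl :: "nat \<Rightarrow> nat list \<Rightarrow> freering" where
  "dl i [] = 0"
| "dl i (j # ws) = (if i = j then mon ws else 0) + var j * dl i ws"

definition der :: "nat \<Rightarrow> freering \<Rightarrow> freering" where
  "der i = frag_extend (\<lambda>w. case w of Word ws \<Rightarrow> dl i ws)"

lemma der_mon: "der i (mon ws) = dl i ws"
  by (simp add: der_def mon_frag)

lemma der_add: "der i (a + b) = der i a + der i b"
  by (simp add: der_def frag_extend_add)
lemma der_diff: "der i (a - b) = der i a - der i b"
  by (simp add: der_def frag_extend_diff)
lemma der_minus: "der i (- a) = - der i a"
  by (simp add: der_def frag_extend_minus)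
lemma der_zero: "der i 0 = 0"
  by (simp add: der_def)
lemma der_sum: "finite A \<Longrightarrow> der i (sum f A) = (\<Sum>a\<in>A. der i (f a))"
  by (simp add: der_def frag_extend_sum)

lemma dl_append: "dl i (u @ v) = dl i u * mon v + mon u * dl i v"
  proof (induction u)
  case Nil then show ?case by (simp add: mon_Nil)
next
  case (Cons j u) then show ?case
    by (cases "i = j") (simp_all add: mon_Cons mon_append distrib_left distrib_right mult.assoc add.assoc)
qed

lemma der_mult: "der i (a * b) = der i a * b + a * der i b"
proof -
  have "\<forall>b. der i (a * b) = der i a * b + a * der i b"
    using subset_UNIV
  proof (induction a rule: frag_induction)
    case zero
    then show ?case by (simp add: der_zero)
  next
    case (one x)
    show ?case
    proof
      fix b
      show "der i (frag_of x * b) = der i (frag_of x) * b + frag_of x * der i b"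
        using subset_UNIV
      proof (induction b rule: frag_induction)
        case zero
        then show ?case by (simp add: der_zero)
      next
        case (one y)
        obtain u where u: "x = Word u" by (cases x) auto
        obtain v where v: "y = Word v" by (cases y) auto
        show ?case
          unfolding u v mon_frag[symmetric] mon_append[symmetric] der_mon dl_append ..
      next
        case (diff a b)
        then show ?case by (simp add: der_diff algebra_simps)
      qed
    qed
  next
    case (diff a b)
    then show ?case by (simp add: der_diff algebra_simps)
  qed
  then show ?thesis by blast
qed

lemma der_one: "der i 1 = 0"
  using der_mon[of i "[]"] by (simp add: mon_Nil)

lemma der_var: "der i (var j) = (if i = j then 1 else 0)"
  using der_mon[of i "[j]"] by (simp add: mon_Nil mon_single)

lemma der_of_nat: "der i (of_nat n) = 0"
  by (induction n) (simp_all add: der_zero der_add der_one)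

lemma dl_sorted: "sorted ws \<Longrightarrow> dl i ws = of_nat (count_list ws i) * mon (remove1 i ws)"
proof (induction ws)
  case Nil
  then show ?case by simp
next
  case (Cons j ws)
  then have s: "sorted ws" and ge: "\<forall>x\<in>set ws. j \<le> x" by auto
  note IH = Cons.IH[OF s]
  show ?case
  proof (cases "i = j")
    case True
    show ?thesis
    proof (cases "i \<in> set ws")
      case True2: True
      then obtain w' where w: "ws = i # w'"
        using ge s \<open>i = j\<close>
      proof (cases ws)
        case Nil then show ?thesis using True2 by simp
      next
        case (Cons a w')
        have "a \<le> i" using True2 s Cons by auto
        moreover have "j \<le> a" using ge Cons by auto
        ultimately show ?thesis using Cons \<open>i = j\<close> that by auto
      qed
      have "dl i (j # ws) = mon ws + var i * (of_nat (count_list ws i) * mon w')"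
        using IH True w by simp
      also have "\<dots> = mon ws + of_nat (count_list ws i) * (var i * mon w')"
        by (metis mult.assoc mult_of_nat_commute)
      also have "\<dots> = of_nat (count_list (j # ws) i) * mon (remove1 i (j # ws))"
        using True w by (simp add: mon_Cons algebra_simps)
      finally show ?thesis .
    next
      case False
      then have "count_list ws i = 0" by (simp add: count_list_0_iff)
      then show ?thesis using IH True by simp
    qed
  next
    case False
    have "dl i (j # ws) = var j * (of_nat (count_list ws i) * mon (remove1 i ws))"
      using IH False by simp
    also have "\<dots> = of_nat (count_list ws i) * (var j * mon (remove1 i ws))"
      by (metis mult.assoc mult_of_nat_commute)
    finally show ?thesis using False by (simp add: mon_Cons)
  qed
qed

lemma commut_var_lcomm: "is \<noteq> [] \<Longrightarrow> commut (lcomm is) (var k) = lcomm (is @ [k])"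
  by (cases "is") simp_all

lemma der_lcomm_aux: "js \<noteq> [] \<Longrightarrow> der i (foldl (\<lambda>a j. commut a (var j)) (var h) js) = 0"
proof (induction js rule: rev_induct)
  case Nil then show ?case by simp
next
  case (snoc j js)
  show ?case
  proof (cases "js = []")
    case True
    then show ?thesis
      by (simp add: commut_def der_diff der_mult der_var)
  next
    case False
    then show ?thesis using snoc
      by (simp add: commut_def der_diff der_mult der_var)
  qed
qed

lemma der_Gamma: "g \<in> Gamma \<Longrightarrow> der i g = 0"
proof (induction rule: Gamma.induct)
  case one then show ?case by (simp add: der_one)
next
  case (gen "is")
  then obtain h js where "is = h # js" "js \<noteq> []"
    by (cases "is"; cases "tl is") auto
  then show ?case using der_lcomm_aux by simp
next
  case (add a b) then show ?case by (simp add: der_add)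
next
  case (neg a) then show ?case by (simp add: der_minus)
next
  case (mult a b) then show ?case by (simp add: der_mult)
qed

lemma Gamma_zero: "0 \<in> Gamma"
  using Gamma.add[OF Gamma.one Gamma.neg[OF Gamma.one]] by simp

lemma Gamma_diff: "a \<in> Gamma \<Longrightarrow> b \<in> Gamma \<Longrightarrow> a - b \<in> Gamma"
  using Gamma.add[OF _ Gamma.neg] by (metis diff_conv_add_uminus)

lemma Gamma_commut: "g \<in> Gamma \<Longrightarrow> commut g (var k) \<in> Gamma"
proof (induction rule: Gamma.induct)
  case one then show ?case by (simp add: commut_def Gamma_zero)
next
  case (gen "is")
  then have "is \<noteq> []" by auto
  then show ?case using gen commut_var_lcomm[of "is" k]
    by (metis Gamma.gen le_trans length_append_singleton le_SucI)
next
  case (add a b)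
  have "commut (a + b) (var k) = commut a (var k) + commut b (var k)"
    by (simp add: commut_def algebra_simps)
  then show ?case using add Gamma.add by simp
next
  case (neg a)
  have "commut (- a) (var k) = - commut a (var k)"
    by (simp add: commut_def algebra_simps)
  then show ?case using neg Gamma.neg by simp
next
  case (mult a b)
  have "commut (a * b) (var k) = a * commut b (var k) + commut a (var k) * b"
    by (simp add: commut_def algebra_simps)
  then show ?case using mult Gamma.add Gamma.mult by simp
qed

lemma commut_vars_Gamma: "commut (var k) (var i) \<in> Gamma"
  using Gamma.gen[of "[k, i]"] by simp

inductive_set Sp :: "nat \<Rightarrow> nat \<Rightarrow> freering set" for n m where
  zero: "0 \<in> Sp n m"
| gen: "sorted is \<Longrightarrow> length is \<le> n \<Longrightarrow> (\<forall>j\<in>set is. m \<le> j) \<Longrightarrow> g \<in> Gamma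
        \<Longrightarrow> mon is * g \<in> Sp n m"
| add: "a \<in> Sp n m \<Longrightarrow> b \<in> Sp n m \<Longrightarrow> a + b \<in> Sp n m"

lemma Sp_mono: "a \<in> Sp n m \<Longrightarrow> n \<le> n' \<Longrightarrow> m' \<le> m \<Longrightarrow> a \<in> Sp n' m'"
proof (induction rule: Sp.induct)
  case zero show ?case by (rule Sp.zero)
next
  case (gen "is" g) then show ?case by (intro Sp.gen) auto
next
  case (add a b) then show ?case by (intro Sp.add) auto
qed

lemma Sp_rmult: "a \<in> Sp n m \<Longrightarrow> g \<in> Gamma \<Longrightarrow> a * g \<in> Sp n m"
proof (induction rule: Sp.induct)
  case zero then show ?case by (simp add: Sp.zero)
next
  case (gen "is" h) then show ?case
    using Sp.gen[of "is" n m "h * g"] Gamma.mult by (simp add: mult.assoc)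
next
  case (add a b) then show ?case by (simp add: distrib_right Sp.add)
qed

lemma Sp_head: "a \<in> Sp n i \<Longrightarrow> m \<le> i \<Longrightarrow> var i * a \<in> Sp (Suc n) m"
proof (induction rule: Sp.induct)
  case zero then show ?case by (simp add: Sp.zero)
next
  case (gen "is" g)
  have "mon (i # is) * g \<in> Sp (Suc n) m"
    using gen by (intro Sp.gen) auto
  then show ?case by (simp add: mon_Cons mult.assoc)
next
  case (add a b) then show ?case by (simp add: distrib_left Sp.add)
qed

lemma straighten: "(\<forall>m k is. m \<le> k \<and> sorted is \<and> (\<forall>j\<in>set is. m \<le> j) \<and> length is < n
                      \<longrightarrow> var k * mon is \<in> Sp n m) \<and>
                   (\<forall>m ws g. g \<in> Gamma \<and> (\<forall>j\<in>set ws. m \<le> j) \<and> length ws \<le> n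
                      \<longrightarrow> g * mon ws \<in> Sp n m)"
proof (induction n)
  case 0
  show ?case
  proof (intro conjI allI impI)
    fix m k :: nat and "is" :: "nat list" assume "m \<le> k \<and> sorted is \<and> (\<forall>j\<in>set is. m \<le> j) \<and> length is < 0"
    then show "var k * mon is \<in> Sp 0 m" by simp
  next
    fix m :: nat and ws g assume a: "g \<in> Gamma \<and> (\<forall>j\<in>set ws. m \<le> j) \<and> length ws \<le> 0"
    then have "ws = []" by simp
    then show "g * mon ws \<in> Sp 0 m"
      using Sp.gen[of "[]" 0 m g] a by (simp add: mon_Nil)
  qed
next
  case (Suc n)
  have Q: "var k * mon is \<in> Sp (Suc n) m"
    if h: "m \<le> k" "sorted is" "\<forall>j\<in>set is. m \<le> j" "length is < Suc n" for m k "is"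
  proof (cases "is")
    case Nil
    then show ?thesis using Sp.gen[of "[k]" "Suc n" m 1] h Gamma.one
      by (simp add: mon_single mon_Nil)
  next
    case (Cons i rest)
    show ?thesis
    proof (cases "k \<le> i")
      case True
      have "mon (k # is) * 1 \<in> Sp (Suc n) m"
        using h True Cons Gamma.one by (intro Sp.gen) auto
      then show ?thesis by (simp add: mon_Cons)
    next
      case False
      have eq: "var k * mon is = var i * (var k * mon rest) + commut (var k) (var i) * mon rest"
        using Cons by (simp add: mon_Cons commut_def algebra_simps)
      have "var k * mon rest \<in> Sp n i"
        using Suc.IH h Cons False by auto
      then have 1: "var i * (var k * mon rest) \<in> Sp (Suc n) m"
        using h Cons by (intro Sp_head) auto
      have "commut (var k) (var i) * mon rest \<in> Sp n m"
        using Suc.IH h Cons commut_vars_Gamma by auto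
      then have 2: "commut (var k) (var i) * mon rest \<in> Sp (Suc n) m"
        by (rule Sp_mono) auto
      show ?thesis using eq 1 2 Sp.add by simp
    qed
  qed
  have Q': "var k * a \<in> Sp (Suc n) m" if "a \<in> Sp n m" "m \<le> k" for a k m
    using that
  proof (induction rule: Sp.induct)
    case zero then show ?case by (simp add: Sp.zero)
  next
    case (gen "is" g)
    have "var k * mon is \<in> Sp (Suc n) m" using gen by (intro Q) auto
    then show ?case using Sp_rmult gen by (simp add: mult.assoc[symmetric])
  next
    case (add a b) then show ?case by (simp add: distrib_left Sp.add)
  qed
  have P: "g * mon ws \<in> Sp (Suc n) m"
    if h: "g \<in> Gamma" "\<forall>j\<in>set ws. m \<le> j" "length ws \<le> Suc n" for m ws g
  proof (cases ws)
    case Nil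
    then show ?thesis using Sp.gen[of "[]" "Suc n" m g] h by (simp add: mon_Nil)
  next
    case (Cons k ws')
    have eq: "g * mon ws = var k * (g * mon ws') + commut g (var k) * mon ws'"
      using Cons by (simp add: mon_Cons commut_def algebra_simps)
    have "g * mon ws' \<in> Sp n m" using Suc.IH h Cons by auto
    then have 1: "var k * (g * mon ws') \<in> Sp (Suc n) m"
      using Q' h Cons by auto
    have "commut g (var k) * mon ws' \<in> Sp n m"
      using Suc.IH h Cons Gamma_commut by auto
    then have 2: "commut g (var k) * mon ws' \<in> Sp (Suc n) m"
      by (rule Sp_mono) auto
    show ?thesis using eq 1 2 Sp.add by simp
  qed
  show ?case using Q P by blast
qed

lemma span_all: "\<exists>n. r \<in> Sp n 0"
  using subset_UNIV
proof (induction r rule: frag_induction)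
  case zero then show ?case using Sp.zero by blast
next
  case (one x)
  obtain ws where x: "x = Word ws" by (cases x) auto
  have "1 * mon ws \<in> Sp (length ws) 0"
    using straighten[of "length ws"] Gamma.one by blast
  then show ?case using x by (auto simp: mon_frag)
next
  case (diff a b)
  then obtain n1 n2 where "a \<in> Sp n1 0" "b \<in> Sp n2 0" by blast
  then have a: "a \<in> Sp (max n1 n2) 0" and b: "b \<in> Sp (max n1 n2) 0"
    using Sp_mono by auto
  have "b * (-1) \<in> Sp (max n1 n2) 0"
    by (rule Sp_rmult[OF b Gamma.neg[OF Gamma.one]])
  then have "a + b * (-1) \<in> Sp (max n1 n2) 0" using a Sp.add by blast
  then show ?case by auto
qed

lemma torsion_free:
  fixes g :: freering
  assumes "of_nat c * g = 0" "c > 0"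
  shows "g = 0"
proof (rule poly_mapping_eqI)
  fix k
  have "of_nat c * g = Poly_Mapping.map ((*) (of_nat c)) g"
    by (simp add: mult_map_scale_conv_mult)
  then have "Poly_Mapping.lookup (of_nat c * g) k = of_nat c * Poly_Mapping.lookup g k"
    by (simp add: Poly_Mapping.map.rep_eq when_def)
  then show "Poly_Mapping.lookup g k = Poly_Mapping.lookup 0 k" using assms by simp
qed

lemma free_finish:
  assumes fin: "finite A" and inj: "inj_on L A"
    and ne: "\<forall>a\<in>A. L a \<noteq> [] \<longrightarrow> g a = 0"
    and sum0: "(\<Sum>a\<in>A. mon (L a) * g a) = 0"
  shows "\<forall>a\<in>A. g a = 0"
proof
  fix a assume a: "a \<in> A"
  show "g a = 0"
  proof (cases "L a = []")
    case False then show ?thesis using ne a by blast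
  next
    case True
    have "(\<Sum>b\<in>A. mon (L b) * g b) = (\<Sum>b\<in>A. if b = a then g a else 0)"
    proof (rule sum.cong)
      fix b assume b: "b \<in> A"
      show "mon (L b) * g b = (if b = a then g a else 0)"
      proof (cases "b = a")
        case True then show ?thesis using \<open>L a = []\<close> by (simp add: mon_Nil)
      next
        case False
        then have "L b \<noteq> []" using inj a b \<open>L a = []\<close> by (metis inj_on_def)
        then show ?thesis using ne b False by simp
      qed
    qed simp
    also have "\<dots> = g a" using fin a by simp
    finally show ?thesis using sum0 by simp
  qed
qed

lemma free_aux:
  "\<forall>A (L :: 'a \<Rightarrow> nat list) g. finite A \<and> inj_on L A \<and>
     (\<forall>a\<in>A. sorted (L a) \<and> length (L a) \<le> N \<and> (\<forall>i. der i (g a) = 0)) \<and>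
     (\<Sum>a\<in>A. mon (L a) * g a) = 0 \<longrightarrow> (\<forall>a\<in>A. g a = 0)"
proof (induction N)
  case 0
  show ?case
  proof (intro allI impI)
    fix A and L :: "'a \<Rightarrow> nat list" and g
    assume H: "finite A \<and> inj_on L A \<and>
     (\<forall>a\<in>A. sorted (L a) \<and> length (L a) \<le> 0 \<and> (\<forall>i. der i (g a) = 0)) \<and>
     (\<Sum>a\<in>A. mon (L a) * g a) = 0"
    then have "\<forall>a\<in>A. L a \<noteq> [] \<longrightarrow> g a = 0" by auto
    then show "\<forall>a\<in>A. g a = 0" using free_finish H by blast
  qed
next
  case (Suc N)
  show ?case
  proof (intro allI impI)
    fix A and L :: "'a \<Rightarrow> nat list" and g
    assume H: "finite A \<and> inj_on L A \<and>
     (\<forall>a\<in>A. sorted (L a) \<and> length (L a) \<le> Suc N \<and> (\<forall>i. der i (g a) = 0)) \<and>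
     (\<Sum>a\<in>A. mon (L a) * g a) = 0"
    then have fin: "finite A" and inj: "inj_on L A"
      and srt: "\<And>a. a \<in> A \<Longrightarrow> sorted (L a)"
      and len: "\<And>a. a \<in> A \<Longrightarrow> length (L a) \<le> Suc N"
      and dg: "\<And>a i. a \<in> A \<Longrightarrow> der i (g a) = 0"
      and s0: "(\<Sum>a\<in>A. mon (L a) * g a) = 0" by auto
    have "\<forall>a\<in>A. L a \<noteq> [] \<longrightarrow> g a = 0"
    proof (intro ballI impI)
      fix a assume a: "a \<in> A" and nz: "L a \<noteq> []"
      define i where "i = hd (L a)"
      have ia: "i \<in> set (L a)" using nz by (simp add: i_def)
      define A' where "A' = {b\<in>A. i \<in> set (L b)}"
      define g' where "g' b = of_nat (count_list (L b) i) * g b" for b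
      have "0 = der i (\<Sum>b\<in>A. mon (L b) * g b)" using s0 by (simp add: der_zero)
      also have "\<dots> = (\<Sum>b\<in>A. der i (mon (L b)) * g b)"
        using fin dg by (simp add: der_sum der_mult)
      also have "\<dots> = (\<Sum>b\<in>A. of_nat (count_list (L b) i) * mon (remove1 i (L b)) * g b)"
        using srt by (simp add: der_mon dl_sorted)
      also have "\<dots> = (\<Sum>b\<in>A'. mon (remove1 i (L b)) * g' b)"
      proof (rule sum.mono_neutral_cong_right)
        show "finite A" by (rule fin)
        show "A' \<subseteq> A" by (auto simp: A'_def)
        show "\<forall>b\<in>A - A'. of_nat (count_list (L b) i) * mon (remove1 i (L b)) * g b = 0"
          by (auto simp: A'_def count_list_0_iff)
        show "of_nat (count_list (L b) i) * mon (remove1 i (L b)) * g b =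
              mon (remove1 i (L b)) * g' b" if "b \<in> A'" for b
          by (simp add: g'_def mult_of_nat_commute mult.assoc)
      qed
      finally have s1: "(\<Sum>b\<in>A'. mon ((remove1 i \<circ> L) b) * g' b) = 0" by simp
      have finA': "finite A'" using fin by (simp add: A'_def)
      have injA': "inj_on (remove1 i \<circ> L) A'"
      proof (rule inj_onI)
        fix b c assume b: "b \<in> A'" and c: "c \<in> A'"
          and eq: "(remove1 i \<circ> L) b = (remove1 i \<circ> L) c"
        have "L b = insort i (remove1 i (L b))"
          using b srt by (simp add: A'_def insort_remove1)
        also have "\<dots> = insort i (remove1 i (L c))" using eq by simp
        also have "\<dots> = L c"
          using c srt by (simp add: A'_def insort_remove1)
        finally show "b = c" using inj b c by (auto simp: A'_def inj_on_def)
      qed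
      have props: "\<forall>b\<in>A'. sorted ((remove1 i \<circ> L) b) \<and> length ((remove1 i \<circ> L) b) \<le> N
                    \<and> (\<forall>j. der j (g' b) = 0)"
      proof
        fix b assume b: "b \<in> A'"
        then have bA: "b \<in> A" and ib: "i \<in> set (L b)" by (auto simp: A'_def)
        have "length (remove1 i (L b)) = length (L b) - 1"
          using ib by (simp add: length_remove1)
        then have "length (remove1 i (L b)) \<le> N" using len[OF bA] by simp
        moreover have "sorted (remove1 i (L b))" using srt[OF bA] by (rule sorted_remove1)
        moreover have "\<forall>j. der j (g' b) = 0"
          using dg[OF bA] by (simp add: g'_def der_mult der_of_nat)
        ultimately show "sorted ((remove1 i \<circ> L) b) \<and> length ((remove1 i \<circ> L) b) \<le> N
                    \<and> (\<forall>j. der j (g' b) = 0)" by simp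
      qed
      have "\<forall>b\<in>A'. g' b = 0"
        using Suc.IH finA' injA' props s1 by blast
      moreover have aA': "a \<in> A'" using a ia by (simp add: A'_def)
      ultimately have "of_nat (count_list (L a) i) * g a = 0" by (simp add: g'_def)
      moreover have "count_list (L a) i > 0" using ia by (metis count_list_0_iff gr0I)
      ultimately show "g a = 0" by (rule torsion_free)
    qed
    then show "\<forall>a\<in>A. g a = 0" using free_finish fin inj s0 by blast
  qed
qed

lemma freeness:
  assumes "finite F" "F \<subseteq> {is. sorted is}" "\<forall>w\<in>F. g w \<in> Gamma"
    "(\<Sum>w\<in>F. mon w * g w) = 0"
  shows "\<forall>w\<in>F. g w = 0"
proof -
  define N where "N = Max (length ` F)"
  have "\<forall>w\<in>F. length w \<le> N" using assms(1) by (auto simp: N_def)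
  then have H: "finite F \<and> inj_on id F \<and> (\<forall>a\<in>F. sorted (id a) \<and> length (id a) \<le> N \<and>
     (\<forall>i. der i (g a) = 0)) \<and> (\<Sum>a\<in>F. mon (id a) * g a) = 0"
    using assms der_Gamma by (auto simp: subset_eq)
  show ?thesis using free_aux[of N, rule_format, of F id g] H by blast
qed

lemma J_sub_Gamma: "S \<subseteq> Gamma \<Longrightarrow> a \<in> left_ideal_in Gamma S \<Longrightarrow> a \<in> Gamma"
proof -
  assume SG: "S \<subseteq> Gamma"
  assume "a \<in> left_ideal_in Gamma S"
  then show "a \<in> Gamma"
  proof (induction rule: left_ideal_in.induct)
    case zero then show ?case by (simp add: Gamma_zero)
  next
    case (gen r s) then show ?case using Gamma.mult SG by blast
  next
    case (add a b) then show ?case using Gamma.add by blast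
  qed
qed

lemma I_lmult: "a \<in> left_ideal_in UNIV S \<Longrightarrow> c * a \<in> left_ideal_in UNIV S"
proof (induction rule: left_ideal_in.induct)
  case zero then show ?case by (simp add: left_ideal_in.zero)
next
  case (gen r s)
  have "(c * r) * s \<in> left_ideal_in UNIV S" using gen by (intro left_ideal_in.gen) auto
  then show ?case by (simp add: mult.assoc)
next
  case (add a b) then show ?case by (simp add: distrib_left left_ideal_in.add)
qed

lemma J_sub_I: "a \<in> left_ideal_in Gamma S \<Longrightarrow> a \<in> left_ideal_in UNIV S"
proof (induction rule: left_ideal_in.induct)
  case zero then show ?case by (rule left_ideal_in.zero)
next
  case (gen r s) then show ?case by (intro left_ideal_in.gen) auto
next
  case (add a b) then show ?case by (simp add: left_ideal_in.add)
qed

lemma summand_sub_I: "x \<in> summand S w \<Longrightarrow> x \<in> left_ideal_in UNIV S"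
  unfolding summand_def using J_sub_I I_lmult by blast

lemma I_sum: "finite F \<Longrightarrow> (\<forall>w\<in>F. f w \<in> left_ideal_in UNIV S) \<Longrightarrow> sum f F \<in> left_ideal_in UNIV S"
  by (induction F rule: finite_induct) (auto intro: left_ideal_in.zero left_ideal_in.add)

lemma summand_add: "x \<in> summand S w \<Longrightarrow> y \<in> summand S w \<Longrightarrow> x + y \<in> summand S w"
proof -
  assume "x \<in> summand S w" "y \<in> summand S w"
  then obtain a b where "x = mon w * a" "a \<in> left_ideal_in Gamma S" "y = mon w * b" "b \<in> left_ideal_in Gamma S"
    unfolding summand_def by blast
  then have "x + y = mon w * (a + b)" "a + b \<in> left_ideal_in Gamma S"
    by (simp_all add: distrib_left left_ideal_in.add)
  then show ?thesis unfolding summand_def by blast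
qed

lemma summand_zero: "0 \<in> summand S w"
  unfolding summand_def using left_ideal_in.zero by force

definition RR :: "freering set \<Rightarrow> freering set" where
  "RR S = {sum f F | F f. finite F \<and> F \<subseteq> {is. sorted is} \<and> (\<forall>w\<in>F. f w \<in> summand S w)}"

lemma RR_add:
  assumes "x \<in> RR S" "y \<in> RR S" shows "x + y \<in> RR S"
proof -
  obtain F f where F: "x = sum f F" "finite F" "F \<subseteq> {is. sorted is}" "\<forall>w\<in>F. f w \<in> summand S w"
    using assms(1) unfolding RR_def by blast
  obtain G g where G: "y = sum g G" "finite G" "G \<subseteq> {is. sorted is}" "\<forall>w\<in>G. g w \<in> summand S w"
    using assms(2) unfolding RR_def by blast
  define h where "h w = (if w \<in> F then f w else 0) + (if w \<in> G then g w else 0)" for w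
  have "sum h (F \<union> G) = sum (\<lambda>w. if w \<in> F then f w else 0) (F \<union> G)
      + sum (\<lambda>w. if w \<in> G then g w else 0) (F \<union> G)"
    by (simp add: h_def sum.distrib)
  also have "\<dots> = x + y"
    using F G by (simp add: sum.If_cases Int_absorb1 Int_absorb2 Un_Int_eq)
  finally have "x + y = sum h (F \<union> G)" by simp
  moreover have "\<forall>w\<in>F \<union> G. h w \<in> summand S w"
    using F G summand_add summand_zero by (auto simp: h_def)
  ultimately show ?thesis using F G unfolding RR_def by blast
qed

lemma RR_single: "sorted w \<Longrightarrow> x \<in> summand S w \<Longrightarrow> x \<in> RR S"
  unfolding RR_def by (rule CollectI, rule exI[of _ "{w}"], rule exI[of _ "\<lambda>_. x"]) simp

lemma RR_zero: "0 \<in> RR S"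
  unfolding RR_def by (rule CollectI, rule exI[of _ "{}"]) simp

lemma Sp_RR: "a \<in> Sp n m \<Longrightarrow> s \<in> S \<Longrightarrow> a * s \<in> RR S"
proof (induction rule: Sp.induct)
  case zero then show ?case by (simp add: RR_zero)
next
  case (gen "is" g)
  have "g * s \<in> left_ideal_in Gamma S" using gen by (intro left_ideal_in.gen)
  then have "mon is * (g * s) \<in> summand S is" by (auto simp: summand_def)
  then show ?case using gen RR_single by (simp add: mult.assoc)
next
  case (add a b) then show ?case by (simp add: distrib_right RR_add)
qed

lemma RR_elim:
  assumes "x \<in> RR S"
  obtains F a where "finite F" "F \<subseteq> {is. sorted is}" "\<forall>w\<in>F. a w \<in> left_ideal_in Gamma S"
    "x = (\<Sum>w\<in>F. mon w * a w)"
proof -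
  obtain F f where F: "x = sum f F" "finite F" "F \<subseteq> {is. sorted is}" "\<forall>w\<in>F. f w \<in> summand S w"
    using assms unfolding RR_def by blast
  then have "\<forall>w\<in>F. \<exists>a. f w = mon w * a \<and> a \<in> left_ideal_in Gamma S"
    unfolding summand_def by blast
  then obtain a where a: "\<forall>w\<in>F. f w = mon w * a w \<and> a w \<in> left_ideal_in Gamma S"
    by metis
  show ?thesis
    by (rule that[of F a]) (use F a in auto)
qed

theorem lemma2p4:
  fixes S :: "freering set"
  assumes "S \<subseteq> Gamma"
  shows "left_ideal_in UNIV S =
           {sum f F | F f. finite F \<and> F \<subseteq> {is. sorted is} \<and>
                           (\<forall>w\<in>F. f w \<in> summand S w)}
         \<and> (\<forall>F f. finite F \<and> F \<subseteq> {is. sorted is} \<and> (\<forall>w\<in>F. f w \<in> summand S w)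
              \<and> sum f F = 0 \<longrightarrow> (\<forall>w\<in>F. f w = 0))
         \<and> left_ideal_in UNIV S \<inter> Gamma = left_ideal_in Gamma S"
proof -
  have P1: "left_ideal_in UNIV S = RR S"
  proof
    show "left_ideal_in UNIV S \<subseteq> RR S"
    proof
      fix x assume "x \<in> left_ideal_in UNIV S"
      then show "x \<in> RR S"
      proof (induction rule: left_ideal_in.induct)
        case zero then show ?case by (rule RR_zero)
      next
        case (gen r s)
        obtain n where "r \<in> Sp n 0" using span_all by blast
        then show ?case using gen Sp_RR by blast
      next
        case (add a b) then show ?case by (simp add: RR_add)
      qed
    qed
  next
    show "RR S \<subseteq> left_ideal_in UNIV S"
    proof
      fix x assume "x \<in> RR S"
      then obtain F f where "x = sum f F" "finite F" "\<forall>w\<in>F. f w \<in> summand S w"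
        unfolding RR_def by blast
      then show "x \<in> left_ideal_in UNIV S" using I_sum summand_sub_I by blast
    qed
  qed
  have P2: "\<forall>F f. finite F \<and> F \<subseteq> {is. sorted is} \<and> (\<forall>w\<in>F. f w \<in> summand S w)
              \<and> sum f F = 0 \<longrightarrow> (\<forall>w\<in>F. f w = 0)"
  proof (intro allI impI)
    fix F f assume H: "finite F \<and> F \<subseteq> {is. sorted is} \<and> (\<forall>w\<in>F. f w \<in> summand S w) \<and> sum f F = (0::freering)"
    then have "\<forall>w\<in>F. \<exists>a. f w = mon w * a \<and> a \<in> left_ideal_in Gamma S"
      unfolding summand_def by blast
    then obtain a where a: "\<forall>w\<in>F. f w = mon w * a w \<and> a w \<in> left_ideal_in Gamma S"
      by metis
    have "(\<Sum>w\<in>F. mon w * a w) = sum f F" using a by (intro sum.cong) auto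
    then have s0: "(\<Sum>w\<in>F. mon w * a w) = 0" using H by simp
    have fa: "\<forall>w\<in>F. a w \<in> Gamma" using a J_sub_Gamma[OF assms] by blast
    have fin: "finite F" and srt: "F \<subseteq> {is. sorted is}" using H by auto
    have "\<forall>w\<in>F. a w = 0" by (rule freeness[OF fin srt fa s0])
    then show "\<forall>w\<in>F. f w = 0" using a by simp
  qed
  have P3: "left_ideal_in UNIV S \<inter> Gamma = left_ideal_in Gamma S"
  proof
    show "left_ideal_in Gamma S \<subseteq> left_ideal_in UNIV S \<inter> Gamma"
      using J_sub_I J_sub_Gamma[OF assms] by blast
  next
    show "left_ideal_in UNIV S \<inter> Gamma \<subseteq> left_ideal_in Gamma S"
    proof
      fix x assume x: "x \<in> left_ideal_in UNIV S \<inter> Gamma"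
      then have "x \<in> RR S" using P1 by blast
      then obtain F a where F: "finite F" "F \<subseteq> {is. sorted is}"
        "\<forall>w\<in>F. a w \<in> left_ideal_in Gamma S" "x = (\<Sum>w\<in>F. mon w * a w)"
        by (rule RR_elim)
      define a' where "a' w = (if w \<in> F then a w else 0)" for w
      define g where "g w = a' w - (if w = [] then x else 0)" for w
      have a'J: "a' w \<in> left_ideal_in Gamma S" for w
        using F by (simp add: a'_def left_ideal_in.zero)
      have "(\<Sum>w\<in>insert [] F. mon w * g w)
          = (\<Sum>w\<in>insert [] F. mon w * a' w) - (\<Sum>w\<in>insert [] F. mon w * (if w = [] then x else 0))"
        by (simp add: g_def right_diff_distrib sum_subtractf)
      also have "(\<Sum>w\<in>insert [] F. mon w * a' w) = (\<Sum>w\<in>F. mon w * a w)"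
        by (rule sum.mono_neutral_cong_right) (use F(1) in \<open>auto simp: a'_def\<close>)
      also have "(\<Sum>w\<in>insert [] F. mon w * (if w = [] then x else 0)) = x"
        using F(1) by (simp add: mon_Nil if_distrib sum.delta cong: if_cong)
      finally have s0: "(\<Sum>w\<in>insert [] F. mon w * g w) = 0" using F(4) by simp
      have "\<forall>w\<in>insert [] F. g w \<in> Gamma"
        using a'J J_sub_Gamma[OF assms] x by (auto simp: g_def intro: Gamma_diff)
      moreover have "finite (insert [] F)" using F by simp
      moreover have "insert [] F \<subseteq> {is. sorted is}" using F by auto
      ultimately have "\<forall>w\<in>insert [] F. g w = 0"
        using freeness[of "insert [] F" g] s0 by blast
      then have "x = a' []" by (simp add: g_def)
      then show "x \<in> left_ideal_in Gamma S" using a'J by simp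
    qed
  qed
  show ?thesis using P1 P2 P3 unfolding RR_def by blast
qed

end
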